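(* Let $f:\mathbb{R}^n\to\mathbb{R}$ be a convex, continuously differentiable, locally strongly convex function with locally Lipschitz gradient and $\mathcal{X}^*:=\arg\min f\neq\emptyset$, optimal value $f^*$. Let $x^0$ be such that $\Lambda(x^0):=\{x:f(x)\le f(x^0)\}$ is bounded; let $r:=\max\{\|x\|:x\in\Lambda(x^0)\}$, $\Omega:=\overline{B}(0;5r)$, let $L_\Omega>0$ satisfy $\|\nabla f(x)-\nabla f(y)\|\le L_\Omega\|x-y\|$ on $\Omega$, and $\mu_\Omega:=\inf_{x,y\in\Omega,x\ne y}\frac{\langle\nabla f(y)-\nabla f(x),y-x\rangle}{\|y-x\|^2}$, with $\mu_\Omega<L_\Omega$. Let $(x^k)$ be generated by $x^{k+1}=x^k-\alpha_k\nabla f(x^k)$ with $\alpha_k\in[\bar\alpha,1/L_\Omega]$, $0<\bar\alpha<1/L_\Omega$. Let $\varepsilon>0$, $x^*$ an optimal solution, $q_0:=\frac{2\bar\alpha\mu_\Omega L_\Omega}{\mu_\Omega+L_\Omega}$, $q_1:=\frac{\mu_\Omega^2\bar\alpha^2}{4}$, and for $a,b>0$ let $M(a,b):=\Big\lceil\frac{\log(\varepsilon^{-1})+\log a}{\log(b^{-1})}+1\Big\rceil$. Then: (a) the first index $N_x(\varepsilon)$ with $\|x^k-x^*\|\le\varepsilon$ satisfies $N_x(\varepsilon)\le M(\|x^0-x^*\|,\sqrt{1-q_0})$; (b) the first index $N_f(\varepsilon)$ with $f(x^k)-f^*\le\varepsilon$ satisfies $N_f(\varepsilon)\le M(f(x^0)-f^*,1-q_1)$;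 (c) the first index $N_{\nabla f}(\varepsilon)$ with $\|\nabla f(x^k)\|\le\varepsilon$ satisfies $N_{\nabla f}(\varepsilon)\le M\big(\sqrt{2L_\Omega^2\mu_\Omega^{-1}(f(x^0)-f^* )},\sqrt{1-q_1}\big)$.
   Context: $f$ is locally strongly convex if every $x$ has $\delta_x>0$, $\mu_x>0$ such that $f(y)\ge f(z)+\langle\nabla f(z),y-z\rangle+\frac{\mu_x}{2}\|y-z\|^2$ for all $y,z\in B(x;\delta_x)$. *)

theory Defs
  imports "HOL-Analysis.Analysis"
begin

definition is_gradient :: "('a::euclidean_space \<Rightarrow> real) \<Rightarrow> ('a \<Rightarrow> 'a) \<Rightarrow> bool" where
  "is_gradient f df \<longleftrightarrow> (\<forall>x. (f has_derivative (\<lambda>h. df x \<bullet> h)) (at x))"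

definition locally_strongly_convex ::
  "('a::euclidean_space \<Rightarrow> real) \<Rightarrow> ('a \<Rightarrow> 'a) \<Rightarrow> bool" where
  "locally_strongly_convex f df \<longleftrightarrow>
     (\<forall>x. \<exists>\<delta>>0. \<exists>\<mu>>0. \<forall>y\<in>ball x \<delta>. \<forall>z\<in>ball x \<delta>.
        f y \<ge> f z + df z \<bullet> (y - z) + \<mu> / 2 * (norm (y - z))\<^sup>2)"

definition locally_lipschitz_grad :: "('a::euclidean_space \<Rightarrow> 'a) \<Rightarrow> bool" where
  "locally_lipschitz_grad df \<longleftrightarrow>
     (\<forall>x. \<exists>\<delta>>0. \<exists>L. \<forall>y\<in>ball x \<delta>. \<forall>z\<in>ball x \<delta>.
        norm (df y - df z) \<le> L * norm (y - z))"

definition sublevel :: "('a \<Rightarrow> real) \<Rightarrow> 'a \<Rightarrow> 'a set" where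
  "sublevel f x0 = {x. f x \<le> f x0}"

definition mu_on :: "('a::euclidean_space \<Rightarrow> 'a) \<Rightarrow> 'a set \<Rightarrow> real" where
  "mu_on df \<Omega> = Inf {(df y - df x) \<bullet> (y - x) / (norm (y - x))\<^sup>2 | x y. x \<in> \<Omega> \<and> y \<in> \<Omega> \<and> x \<noteq> y}"

definition iter_bound :: "real \<Rightarrow> real \<Rightarrow> real \<Rightarrow> int" where
  "iter_bound \<epsilon> a b = \<lceil>(ln (inverse \<epsilon>) + ln a) / ln (inverse b) + 1\<rceil>"

end

theory Submission
  imports Defs
begin
lemma line_deriv:
  assumes "is_gradient f df"
  shows "((\<lambda>t. f (v + t *\<^sub>R d)) has_real_derivative (df (v + t *\<^sub>R d) \<bullet> d)) (at t)"
proof -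
  have l: "((\<lambda>t. v + t *\<^sub>R d) has_derivative (\<lambda>s. s *\<^sub>R d)) (at t)"
    by (auto intro!: derivative_eq_intros)
  have g: "(f has_derivative (\<lambda>h. df (v + t *\<^sub>R d) \<bullet> h)) (at (v + t *\<^sub>R d))"
    using assms unfolding is_gradient_def by blast
  have "((\<lambda>t. f (v + t *\<^sub>R d)) has_derivative (\<lambda>s. s * (df (v + t *\<^sub>R d) \<bullet> d))) (at t)"
    using has_derivative_compose[OF l g] by (simp add: o_def)
  then show ?thesis
    by (simp add: has_field_derivative_def mult_commute_abs)
qed

lemma line_lower:
  assumes "is_gradient f df"
    and "\<And>t. t \<in> {0..1} \<Longrightarrow> c * t * (norm d)\<^sup>2 \<le> (df (v + t *\<^sub>R d) - df v) \<bullet> d"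
  shows "f v + df v \<bullet> d + c / 2 * (norm d)\<^sup>2 \<le> f (v + d)"
proof -
  let ?h = "\<lambda>t. f (v + t *\<^sub>R d) - t * (df v \<bullet> d) - c / 2 * t\<^sup>2 * (norm d)\<^sup>2"
  have "?h 0 \<le> ?h 1"
  proof (rule deriv_nonneg_imp_mono[where g = ?h and a = 0 and b = 1 and g' = "\<lambda>t. df (v + t *\<^sub>R d) \<bullet> d - df v \<bullet> d - c * t * (norm d)\<^sup>2"])
    fix t :: real assume "t \<in> {0..1}"
    show "(?h has_real_derivative df (v + t *\<^sub>R d) \<bullet> d - df v \<bullet> d - c * t * (norm d)\<^sup>2) (at t)"
    proof -
      have d1: "((\<lambda>t. t * (df v \<bullet> d)) has_real_derivative (df v \<bullet> d)) (at t)"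
        by (auto intro!: derivative_eq_intros)
      have d2: "((\<lambda>t. c / 2 * t\<^sup>2 * (norm d)\<^sup>2) has_real_derivative c * t * (norm d)\<^sup>2) (at t)"
        by (auto intro!: derivative_eq_intros)
      show ?thesis using DERIV_diff[OF DERIV_diff[OF line_deriv[OF assms(1)] d1] d2] by simp
    qed
    show "0 \<le> df (v + t *\<^sub>R d) \<bullet> d - df v \<bullet> d - c * t * (norm d)\<^sup>2"
      using assms(2)[OF \<open>t \<in> {0..1}\<close>] by (simp add: inner_diff_left)
  qed simp
  then show ?thesis by simp
qed

lemma line_upper:
  assumes "is_gradient f df"
    and "\<And>t. t \<in> {0..1} \<Longrightarrow> (df (v + t *\<^sub>R d) - df v) \<bullet> d \<le> c * t * (norm d)\<^sup>2"
  shows "f (v + d) \<le> f v + df v \<bullet> d + c / 2 * (norm d)\<^sup>2"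
proof -
  let ?h = "\<lambda>t. f (v + t *\<^sub>R d) - t * (df v \<bullet> d) - c / 2 * t\<^sup>2 * (norm d)\<^sup>2"
  have "?h 1 \<le> ?h 0"
  proof (rule deriv_nonpos_imp_antimono[where g = ?h and a = 0 and b = 1 and g' = "\<lambda>t. df (v + t *\<^sub>R d) \<bullet> d - df v \<bullet> d - c * t * (norm d)\<^sup>2"])
    fix t :: real assume "t \<in> {0..1}"
    show "(?h has_real_derivative df (v + t *\<^sub>R d) \<bullet> d - df v \<bullet> d - c * t * (norm d)\<^sup>2) (at t)"
    proof -
      have d1: "((\<lambda>t. t * (df v \<bullet> d)) has_real_derivative (df v \<bullet> d)) (at t)"
        by (auto intro!: derivative_eq_intros)
      have d2: "((\<lambda>t. c / 2 * t\<^sup>2 * (norm d)\<^sup>2) has_real_derivative c * t * (norm d)\<^sup>2) (at t)"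
        by (auto intro!: derivative_eq_intros)
      show ?thesis using DERIV_diff[OF DERIV_diff[OF line_deriv[OF assms(1)] d1] d2] by simp
    qed
    show "df (v + t *\<^sub>R d) \<bullet> d - df v \<bullet> d - c * t * (norm d)\<^sup>2 \<le> 0"
      using assms(2)[OF \<open>t \<in> {0..1}\<close>] by (simp add: inner_diff_left)
  qed simp
  then show ?thesis by simp
qed

lemma partition:
  fixes x y :: "'a::real_normed_vector"
  assumes "convex K" "x \<in> K" "y \<in> K" "e > 0"
  obtains N :: nat and p where "N > 0" "p 0 = x" "p N = y" "\<And>i. i \<le> N \<Longrightarrow> p i \<in> K"
    "\<And>i. p (Suc i) - p i = (1 / real N) *\<^sub>R (y - x)" "norm ((1 / real N) *\<^sub>R (y - x)) < e"
proof -
  obtain N :: nat where N: "norm (y - x) / e < real N" using reals_Archimedean2 by blast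
  have "0 \<le> norm (y - x) / e" using assms(4) by simp
  then have N0: "N > 0" using N by linarith
  let ?p = "\<lambda>i. x + (real i / real N) *\<^sub>R (y - x)"
  have "norm ((1 / real N) *\<^sub>R (y - x)) = norm (y - x) / real N" by simp
  also have "\<dots> < e" using N N0 assms(4) by (simp add: field_simps)
  finally have ne: "norm ((1 / real N) *\<^sub>R (y - x)) < e" .
  show ?thesis
  proof (rule that[of N ?p, OF N0 _ _ _ _ ne])
    show "?p 0 = x" by simp
    show "?p N = y" using N0 by simp
    fix i assume "i \<le> N"
    then have u: "0 \<le> real i / real N" "real i / real N \<le> 1" using N0 by auto
    have "?p i = (1 - real i / real N) *\<^sub>R x + (real i / real N) *\<^sub>R y"
      by (simp add: algebra_simps)
    then show "?p i \<in> K" using assms(1,2,3) u unfolding convex_alt by metis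
  next
    fix i show "?p (Suc i) - ?p i = (1 / real N) *\<^sub>R (y - x)"
    proof -
      have "?p (Suc i) - ?p i = (real (Suc i) / real N - real i / real N) *\<^sub>R (y - x)"
        by (simp add: scaleR_diff_left)
      also have "real (Suc i) / real N - real i / real N = 1 / real N"
        by (simp add: diff_divide_distrib[symmetric])
      finally show ?thesis .
    qed
  qed
qed


lemma loc_mono:
  assumes "\<forall>y\<in>ball c d. \<forall>z\<in>ball c d. f y \<ge> f z + df z \<bullet> (y - z) + m / 2 * (norm (y - z))\<^sup>2"
    and "y \<in> ball c d" "z \<in> ball c d"
  shows "m * (norm (y - z))\<^sup>2 \<le> (df y - df z) \<bullet> (y - z)"
proof -
  have 1: "f y \<ge> f z + df z \<bullet> (y - z) + m / 2 * (norm (y - z))\<^sup>2" using assms by blast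
  have "f z \<ge> f y + df y \<bullet> (z - y) + m / 2 * (norm (z - y))\<^sup>2" using assms by blast
  then have 2: "f z \<ge> f y + df y \<bullet> (z - y) + m / 2 * (norm (y - z))\<^sup>2" by (simp add: norm_minus_commute)
  have "m * (norm (y - z))\<^sup>2 = m / 2 * (norm (y - z))\<^sup>2 + m / 2 * (norm (y - z))\<^sup>2" by simp
  moreover have "df y \<bullet> (z - y) = - (df y \<bullet> (y - z))" by (simp add: inner_diff_right)
  moreover have "(df y - df z) \<bullet> (y - z) = df y \<bullet> (y - z) - df z \<bullet> (y - z)" by (simp add: inner_diff_left)
  ultimately show ?thesis using 1 2 by linarith
qed

lemma unif_strong_mono:
  fixes f :: "'a::euclidean_space \<Rightarrow> real"
  assumes lsc: "locally_strongly_convex f df" and K: "compact K" "convex K"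
  shows "\<exists>m>0. \<forall>x\<in>K. \<forall>y\<in>K. m * (norm (y - x))\<^sup>2 \<le> (df y - df x) \<bullet> (y - x)"
proof (cases "K = {}")
  case True then show ?thesis by (intro exI[of _ 1]) auto
next
  case False
  obtain \<delta> \<mu> where dm: "\<And>c. \<delta> c > 0" "\<And>c. \<mu> c > 0"
    "\<And>c. \<forall>y\<in>ball c (\<delta> c). \<forall>z\<in>ball c (\<delta> c). f y \<ge> f z + df z \<bullet> (y - z) + \<mu> c / 2 * (norm (y - z))\<^sup>2"
    using lsc unfolding locally_strongly_convex_def by metis
  have LM: "\<mu> c * (norm (y - z))\<^sup>2 \<le> (df y - df z) \<bullet> (y - z)" if "y \<in> ball c (\<delta> c)" "z \<in> ball c (\<delta> c)" for c y z
    using loc_mono[OF dm(3) that] .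
  have "K \<subseteq> (\<Union>c\<in>K. ball c (\<delta> c))" using dm(1) by force
  then obtain C where C: "C \<subseteq> K" "finite C" "K \<subseteq> (\<Union>c\<in>C. ball c (\<delta> c))"
    using compactE_image[OF K(1), of K "\<lambda>c. ball c (\<delta> c)"] by blast
  have Cne: "C \<noteq> {}" using C(3) False by auto
  obtain e where e: "0 < e" "\<And>x. x \<in> K \<Longrightarrow> \<exists>G \<in> (\<lambda>c. ball c (\<delta> c)) ` C. ball x e \<subseteq> G"
    using Heine_Borel_lemma[OF K(1), of "(\<lambda>c. ball c (\<delta> c)) ` C"] C(3) by auto
  define m where "m = Min (\<mu> ` C)"
  have m0: "m > 0" unfolding m_def using C(2) Cne dm(2) by (simp add: Min_gr_iff)
  have mle: "m \<le> \<mu> c" if "c \<in> C" for c unfolding m_def using C(2) that by simp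
  have loc: "m * (norm (q - p))\<^sup>2 \<le> (df q - df p) \<bullet> (q - p)"
    if "p \<in> K" "q \<in> K" "norm (q - p) < e" for p q
  proof -
    obtain c where c: "c \<in> C" "ball p e \<subseteq> ball c (\<delta> c)" using e(2)[of p] \<open>p \<in> K\<close> by blast
    have "p \<in> ball p e" "q \<in> ball p e"
      using e(1) that(3) by (auto simp: dist_norm norm_minus_commute)
    then have "p \<in> ball c (\<delta> c)" "q \<in> ball c (\<delta> c)" using c(2) by (meson subsetD)+
    then have "\<mu> c * (norm (q - p))\<^sup>2 \<le> (df q - df p) \<bullet> (q - p)" using LM by blast
    moreover have "m * (norm (q - p))\<^sup>2 \<le> \<mu> c * (norm (q - p))\<^sup>2"
      using mle[OF c(1)] by (simp add: mult_right_mono)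
    ultimately show ?thesis by linarith
  qed
  show ?thesis
  proof (intro exI[of _ m] conjI m0 ballI)
    fix x y assume xy: "x \<in> K" "y \<in> K"
    obtain N p where Np: "N > 0" "p 0 = x" "p N = y" "\<And>i. i \<le> N \<Longrightarrow> p i \<in> K"
      "\<And>i. p (Suc i) - p i = (1 / real N) *\<^sub>R (y - x)" "norm ((1 / real N) *\<^sub>R (y - x)) < e"
      using partition[OF K(2) xy e(1)] by metis
    have step: "m * (norm (y - x))\<^sup>2 / real N \<le> (df (p (Suc i)) - df (p i)) \<bullet> (y - x)" if "i < N" for i
    proof -
      have "m * (norm (p (Suc i) - p i))\<^sup>2 \<le> (df (p (Suc i)) - df (p i)) \<bullet> (p (Suc i) - p i)"
        using loc[of "p i" "p (Suc i)"] Np(4)[of i] Np(4)[of "Suc i"] that Np(5,6) by simp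
      then have "m * ((norm (y - x))\<^sup>2 / (real N)\<^sup>2) \<le> (1 / real N) * ((df (p (Suc i)) - df (p i)) \<bullet> (y - x))"
        unfolding Np(5) by (simp add: power_divide)
      then have "real N * (m * ((norm (y - x))\<^sup>2 / (real N)\<^sup>2)) \<le> real N * ((1 / real N) * ((df (p (Suc i)) - df (p i)) \<bullet> (y - x)))"
        using Np(1) by (intro mult_left_mono) auto
      moreover have "real N * (m * ((norm (y - x))\<^sup>2 / (real N)\<^sup>2)) = m * (norm (y - x))\<^sup>2 / real N"
        using Np(1) by (simp add: power2_eq_square)
      moreover have "real N * ((1 / real N) * ((df (p (Suc i)) - df (p i)) \<bullet> (y - x))) = (df (p (Suc i)) - df (p i)) \<bullet> (y - x)"
        using Np(1) by simp
      ultimately show ?thesis by simp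
    qed
    have "(\<Sum>i<N. m * (norm (y - x))\<^sup>2 / real N) \<le> (\<Sum>i<N. (df (p (Suc i)) - df (p i)) \<bullet> (y - x))"
      by (rule sum_mono) (use step in auto)
    also have "\<dots> = (\<Sum>i<N. df (p (Suc i)) - df (p i)) \<bullet> (y - x)" by (simp add: inner_sum_left)
    also have "\<dots> = (df y - df x) \<bullet> (y - x)" using sum_lessThan_telescope[of "\<lambda>i. df (p i)" N] by (simp add: Np(2,3))
    finally show "m * (norm (y - x))\<^sup>2 \<le> (df y - df x) \<bullet> (y - x)" using Np(1) by simp
  qed
qed

lemma seg_contract:
  fixes T :: "'a::real_normed_vector \<Rightarrow> 'b::real_normed_vector"
  assumes "convex K" "e > 0"
    and loc: "\<And>p q. p \<in> K \<Longrightarrow> q \<in> K \<Longrightarrow> norm (q - p) < e \<Longrightarrow> norm (T q - T p) \<le> \<rho> * norm (q - p)"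
    and xy: "x \<in> K" "y \<in> K"
  shows "norm (T y - T x) \<le> \<rho> * norm (y - x)"
proof -
  obtain N p where Np: "N > 0" "p 0 = x" "p N = y" "\<And>i. i \<le> N \<Longrightarrow> p i \<in> K"
    "\<And>i. p (Suc i) - p i = (1 / real N) *\<^sub>R (y - x)" "norm ((1 / real N) *\<^sub>R (y - x)) < e"
    using partition[OF assms(1) xy assms(2)] by metis
  have step: "norm (T (p (Suc i)) - T (p i)) \<le> \<rho> * (norm (y - x) / real N)" if "i < N" for i
    using loc[of "p i" "p (Suc i)"] Np(4)[of i] Np(4)[of "Suc i"] that Np(5,6) by simp
  have "norm (T y - T x) = norm (\<Sum>i<N. T (p (Suc i)) - T (p i))"
    using sum_lessThan_telescope[of "\<lambda>i. T (p i)" N] by (simp add: Np(2,3))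
  also have "\<dots> \<le> (\<Sum>i<N. norm (T (p (Suc i)) - T (p i)))" by (rule norm_sum)
  also have "\<dots> \<le> (\<Sum>i<N. \<rho> * (norm (y - x) / real N))" by (rule sum_mono) (use step in auto)
  also have "\<dots> = \<rho> * norm (y - x)" using Np(1) by simp
  finally show ?thesis .
qed

lemma coco_half:
  fixes \<phi> :: "'a::real_inner \<Rightarrow> real"
  assumes conv: "\<And>a b. a \<in> \<Omega> \<Longrightarrow> b \<in> \<Omega> \<Longrightarrow> \<phi> b + d\<phi> b \<bullet> (a - b) \<le> \<phi> a"
    and desc: "\<And>a b. a \<in> \<Omega> \<Longrightarrow> b \<in> \<Omega> \<Longrightarrow> \<phi> a \<le> \<phi> b + d\<phi> b \<bullet> (a - b) + L / 2 * (norm (a - b))\<^sup>2"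
    and L: "L > 0" and x: "x \<in> \<Omega>" and y: "y \<in> \<Omega>" and w: "y - (1 / L) *\<^sub>R (d\<phi> y - d\<phi> x) \<in> \<Omega>"
  shows "\<phi> x + d\<phi> x \<bullet> (y - x) + (norm (d\<phi> y - d\<phi> x))\<^sup>2 / (2 * L) \<le> \<phi> y"
proof -
  define g where "g = d\<phi> y - d\<phi> x"
  define w where "w = y - (1 / L) *\<^sub>R g"
  have wO: "w \<in> \<Omega>" using w by (simp add: w_def g_def)
  have h1: "\<phi> x + d\<phi> x \<bullet> (w - x) \<le> \<phi> w" using conv[OF wO x] .
  have h2: "\<phi> w \<le> \<phi> y + d\<phi> y \<bullet> (w - y) + L / 2 * (norm (w - y))\<^sup>2" using desc[OF wO y] .
  have e1: "d\<phi> x \<bullet> (w - x) = d\<phi> x \<bullet> (y - x) - (1 / L) * (d\<phi> x \<bullet> g)"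
    by (simp add: w_def inner_diff_right algebra_simps)
  have e2: "d\<phi> y \<bullet> (w - y) = - ((1 / L) * (d\<phi> y \<bullet> g))"
    by (simp add: w_def inner_diff_right)
  have e3: "L / 2 * (norm (w - y))\<^sup>2 = (norm g)\<^sup>2 / (2 * L)"
    using L by (simp add: w_def power2_eq_square field_simps)
  have e4: "(1 / L) * (d\<phi> y \<bullet> g) - (1 / L) * (d\<phi> x \<bullet> g) = (norm g)\<^sup>2 / L"
    by (simp add: g_def inner_diff_left power2_norm_eq_inner diff_divide_distrib[symmetric])
  have "(norm g)\<^sup>2 / L = 2 * ((norm g)\<^sup>2 / (2 * L))" using L by simp
  then show ?thesis using h1 h2 e1 e2 e3 e4 unfolding g_def[symmetric] by linarith
qed

lemma cocoercive:
  fixes \<phi> :: "'a::real_inner \<Rightarrow> real"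
  assumes conv: "\<And>a b. a \<in> \<Omega> \<Longrightarrow> b \<in> \<Omega> \<Longrightarrow> \<phi> b + d\<phi> b \<bullet> (a - b) \<le> \<phi> a"
    and desc: "\<And>a b. a \<in> \<Omega> \<Longrightarrow> b \<in> \<Omega> \<Longrightarrow> \<phi> a \<le> \<phi> b + d\<phi> b \<bullet> (a - b) + L / 2 * (norm (a - b))\<^sup>2"
    and L: "L > 0" and x: "x \<in> \<Omega>" and y: "y \<in> \<Omega>"
    and w: "y - (1 / L) *\<^sub>R (d\<phi> y - d\<phi> x) \<in> \<Omega>" and w': "x + (1 / L) *\<^sub>R (d\<phi> y - d\<phi> x) \<in> \<Omega>"
  shows "(norm (d\<phi> y - d\<phi> x))\<^sup>2 / L \<le> (d\<phi> y - d\<phi> x) \<bullet> (y - x)"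
proof -
  have A: "\<phi> x + d\<phi> x \<bullet> (y - x) + (norm (d\<phi> y - d\<phi> x))\<^sup>2 / (2 * L) \<le> \<phi> y"
    by (rule coco_half[OF conv desc L x y w])
  have w2: "x - (1 / L) *\<^sub>R (d\<phi> x - d\<phi> y) \<in> \<Omega>" using w' by (simp add: algebra_simps)
  have "\<phi> y + d\<phi> y \<bullet> (x - y) + (norm (d\<phi> x - d\<phi> y))\<^sup>2 / (2 * L) \<le> \<phi> x"
    by (rule coco_half[OF conv desc L y x w2])
  then have B: "\<phi> y + d\<phi> y \<bullet> (x - y) + (norm (d\<phi> y - d\<phi> x))\<^sup>2 / (2 * L) \<le> \<phi> x"
    by (simp add: norm_minus_commute)
  have "(d\<phi> y - d\<phi> x) \<bullet> (y - x) = - (d\<phi> x \<bullet> (y - x)) - d\<phi> y \<bullet> (x - y)"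
    by (simp add: inner_diff_left inner_diff_right)
  moreover have "(norm (d\<phi> y - d\<phi> x))\<^sup>2 / L = 2 * ((norm (d\<phi> y - d\<phi> x))\<^sup>2 / (2 * L))" using L by simp
  ultimately show ?thesis using A B by linarith
qed

lemma nest_alg:
  fixes G s D \<mu> L :: real
  assumes "G - 2 * \<mu> * s + \<mu> * \<mu> * D \<le> (L - \<mu>) * (s - \<mu> * D)"
  shows "G + \<mu> * L * D \<le> (L + \<mu>) * s"
  using assms by (simp add: algebra_simps)

lemma count_bound:
  fixes u :: "nat \<Rightarrow> real"
  assumes u: "\<And>k. u k \<le> b ^ k * a" and a: "a > 0" and b: "0 < b" "b < 1" and eps: "\<epsilon> > 0"
  shows "(\<exists>k. u k \<le> \<epsilon>) \<and> (LEAST k. u k \<le> \<epsilon>) \<le> nat (iter_bound \<epsilon> a b)"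
proof -
  have "\<exists>K. K \<le> nat (iter_bound \<epsilon> a b) \<and> u K \<le> \<epsilon>"
  proof (cases "a \<le> \<epsilon>")
    case True
    then show ?thesis using u[of 0] by (intro exI[of _ 0]) auto
  next
    case False
    define K where "K = nat (iter_bound \<epsilon> a b)"
    have lb: "ln (inverse b) > 0" using b by (simp add: ln_inverse)
    have la: "ln (inverse \<epsilon>) + ln a > 0" using False eps a by (simp add: ln_inverse)
    define T where "T = (ln (inverse \<epsilon>) + ln a) / ln (inverse b)"
    have T0: "T > 0" unfolding T_def using lb la by simp
    have "real_of_int (iter_bound \<epsilon> a b) \<ge> T + 1" unfolding iter_bound_def T_def by linarith
    then have KT: "real K \<ge> T" unfolding K_def using T0 by linarith
    have "real K * ln (inverse b) \<ge> T * ln (inverse b)" using KT lb by (simp add: mult_right_mono)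
    also have "T * ln (inverse b) = ln (inverse \<epsilon>) + ln a" unfolding T_def using lb by simp
    finally have "real K * ln b + ln a \<le> ln \<epsilon>" using b eps by (simp add: ln_inverse)
    then have "ln (b ^ K * a) \<le> ln \<epsilon>" using b a by (simp add: ln_mult ln_realpow)
    then have "b ^ K * a \<le> \<epsilon>" using b a eps by simp
    then have "u K \<le> \<epsilon>" using u[of K] by linarith
    then show ?thesis using K_def by blast
  qed
  then obtain K where "K \<le> nat (iter_bound \<epsilon> a b)" "u K \<le> \<epsilon>" by blast
  then show ?thesis using Least_le[of "\<lambda>k. u k \<le> \<epsilon>" K] by auto
qed

theorem theorem3p18:
  fixes f :: "'a::euclidean_space \<Rightarrow> real"
    and df :: "'a \<Rightarrow> 'a"
    and x :: "nat \<Rightarrow> 'a"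
    and \<alpha> :: "nat \<Rightarrow> real"
    and x0 xs :: 'a
    and L \<alpha>bar \<epsilon> :: real
  assumes grad: "is_gradient f df"
    and cvx: "convex_on UNIV f"
    and C1: "continuous_on UNIV df"
    and lsc: "locally_strongly_convex f df"
    and llip: "locally_lipschitz_grad df"
    and opt: "\<forall>y. f xs \<le> f y"
    and bdd: "bounded (sublevel f x0)"
    and x0_nonopt: "f xs < f x0"
    and L_pos: "L > 0"
    and L_lip: "\<forall>y\<in>cball 0 (5 * Sup (norm ` sublevel f x0)).
                \<forall>z\<in>cball 0 (5 * Sup (norm ` sublevel f x0)).
                  norm (df y - df z) \<le> L * norm (y - z)"
    and mu_lt: "mu_on df (cball 0 (5 * Sup (norm ` sublevel f x0))) < L"
    and abar: "0 < \<alpha>bar" "\<alpha>bar < 1 / L"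
    and steps: "\<forall>k. \<alpha> k \<in> {\<alpha>bar..1 / L}"
    and start: "x 0 = x0"
    and iter: "\<forall>k. x (Suc k) = x k - \<alpha> k *\<^sub>R df (x k)"
    and eps: "\<epsilon> > 0"
  shows
    "let \<mu> = mu_on df (cball 0 (5 * Sup (norm ` sublevel f x0)));
         q0 = 2 * \<alpha>bar * \<mu> * L / (\<mu> + L);
         q1 = \<mu>\<^sup>2 * \<alpha>bar\<^sup>2 / 4
     in ((\<exists>k. norm (x k - xs) \<le> \<epsilon>) \<and>
         (LEAST k. norm (x k - xs) \<le> \<epsilon>)
            \<le> nat (iter_bound \<epsilon> (norm (x0 - xs)) (sqrt (1 - q0))))
      \<and> ((\<exists>k. f (x k) - f xs \<le> \<epsilon>) \<and>
         (LEAST k. f (x k) - f xs \<le> \<epsilon>)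
            \<le> nat (iter_bound \<epsilon> (f x0 - f xs) (1 - q1)))
      \<and> ((\<exists>k. norm (df (x k)) \<le> \<epsilon>) \<and>
         (LEAST k. norm (df (x k)) \<le> \<epsilon>)
            \<le> nat (iter_bound \<epsilon> (sqrt (2 * L\<^sup>2 / \<mu> * (f x0 - f xs))) (sqrt (1 - q1))))"
proof -
  define S where "S = sublevel f x0"
  define r where "r = Sup (norm ` S)"
  define \<Omega> where "\<Omega> = cball (0::'a) (5 * r)"
  define \<mu> where "\<mu> = mu_on df \<Omega>"
  have x0S: "x0 \<in> S" by (simp add: S_def sublevel_def)
  have xsS: "xs \<in> S" using x0_nonopt by (simp add: S_def sublevel_def)
  have bddn: "bdd_above (norm ` S)" using bdd unfolding S_def bounded_iff bdd_above_def by auto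
  have normS: "norm p \<le> r" if "p \<in> S" for p unfolding r_def using cSup_upper[OF _ bddn] that by auto
  have xne: "x0 \<noteq> xs" using x0_nonopt by auto
  have r0: "r > 0"
  proof (rule ccontr)
    assume "\<not> r > 0"
    then have "norm x0 \<le> 0" "norm xs \<le> 0" using normS[OF x0S] normS[OF xsS] by linarith+
    then show False using xne by simp
  qed
  have inO: "p \<in> \<Omega>" if "norm p \<le> 3 * r" for p using that r0 by (simp add: \<Omega>_def)
  have Lip: "norm (df y - df z) \<le> L * norm (y - z)" if "y \<in> \<Omega>" "z \<in> \<Omega>" for y z
    using L_lip that unfolding \<Omega>_def r_def S_def by blast
  have dxs: "df xs = 0"
  proof -
    have d: "(f has_derivative (\<lambda>h. df xs \<bullet> h)) (at xs)" using grad unfolding is_gradient_def by blast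
    have "(\<lambda>h. df xs \<bullet> h) = (\<lambda>v. 0)"
      using differential_zero_maxmin[OF _ _ d, of UNIV] opt by auto
    then have "df xs \<bullet> df xs = 0" by metis
    then show ?thesis by simp
  qed
  obtain m where m0: "m > 0" and mS: "\<forall>x\<in>\<Omega>. \<forall>y\<in>\<Omega>. m * (norm (y - x))\<^sup>2 \<le> (df y - df x) \<bullet> (y - x)"
    using unif_strong_mono[OF lsc, of \<Omega>] unfolding \<Omega>_def by auto
  define E where "E = {(df y - df x) \<bullet> (y - x) / (norm (y - x))\<^sup>2 | x y. x \<in> \<Omega> \<and> y \<in> \<Omega> \<and> x \<noteq> y}"
  have \<mu>E: "\<mu> = Inf E" by (simp add: \<mu>_def mu_on_def E_def)
  have Em: "m \<le> e" if eE: "e \<in> E" for e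
  proof -
    obtain x y where xy: "x \<in> \<Omega>" "y \<in> \<Omega>" "x \<noteq> y" "e = (df y - df x) \<bullet> (y - x) / (norm (y - x))\<^sup>2"
      using eE unfolding E_def by blast
    then have "(norm (y - x))\<^sup>2 > 0" by simp
    then show ?thesis using mS xy by (simp add: pos_le_divide_eq)
  qed
  have x0O: "x0 \<in> \<Omega>" "xs \<in> \<Omega>" using inO normS x0S xsS r0 by force+
  have Ene: "E \<noteq> {}" unfolding E_def using x0O xne by blast
  have bddE: "bdd_below E" using Em by (auto simp: bdd_below_def)
  have mmu: "m \<le> \<mu>" unfolding \<mu>E by (rule cInf_greatest[OF Ene Em])
  have mu0: "\<mu> > 0" using mmu m0 by linarith
  have muL: "\<mu> < L" using mu_lt unfolding \<mu>_def \<Omega>_def r_def S_def .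
  have SM: "\<mu> * (norm (y - x))\<^sup>2 \<le> (df y - df x) \<bullet> (y - x)" if "x \<in> \<Omega>" "y \<in> \<Omega>" for x y
  proof (cases "x = y")
    case False
    then have "(df y - df x) \<bullet> (y - x) / (norm (y - x))\<^sup>2 \<in> E" using that unfolding E_def by blast
    then have "\<mu> \<le> (df y - df x) \<bullet> (y - x) / (norm (y - x))\<^sup>2" unfolding \<mu>E by (rule cInf_lower[OF _ bddE])
    moreover have "(norm (y - x))\<^sup>2 > 0" using False by simp
    ultimately show ?thesis by (simp add: pos_le_divide_eq)
  qed simp
  have cO: "convex \<Omega>" by (simp add: \<Omega>_def)
  have segO: "v + t *\<^sub>R (u - v) \<in> \<Omega>" if "u \<in> \<Omega>" "v \<in> \<Omega>" "t \<in> {0..1}" for u v t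
  proof -
    have "v + t *\<^sub>R (u - v) = (1 - t) *\<^sub>R v + t *\<^sub>R u" by (simp add: algebra_simps)
    then show ?thesis using cO that unfolding convex_alt by auto
  qed
  have SC: "f v + df v \<bullet> (u - v) + \<mu> / 2 * (norm (u - v))\<^sup>2 \<le> f u" if uv: "u \<in> \<Omega>" "v \<in> \<Omega>" for u v
  proof -
    have "f v + df v \<bullet> (u - v) + \<mu> / 2 * (norm (u - v))\<^sup>2 \<le> f (v + (u - v))"
    proof (rule line_lower[OF grad])
      fix t :: real assume t: "t \<in> {0..1}"
      show "\<mu> * t * (norm (u - v))\<^sup>2 \<le> (df (v + t *\<^sub>R (u - v)) - df v) \<bullet> (u - v)"
      proof (cases "t = 0")
        case False
        then have tp: "t > 0" using t by auto
        have "\<mu> * (norm (v + t *\<^sub>R (u - v) - v))\<^sup>2 \<le> (df (v + t *\<^sub>R (u - v)) - df v) \<bullet> (v + t *\<^sub>R (u - v) - v)"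
          using SM[OF uv(2) segO[OF uv t]] .
        moreover have "v + t *\<^sub>R (u - v) - v = t *\<^sub>R (u - v)" by simp
        ultimately have "\<mu> * (norm (t *\<^sub>R (u - v)))\<^sup>2 \<le> (df (v + t *\<^sub>R (u - v)) - df v) \<bullet> (t *\<^sub>R (u - v))"
          by simp
        moreover have "norm (t *\<^sub>R (u - v)) = t * norm (u - v)" using tp by simp
        moreover have "(df (v + t *\<^sub>R (u - v)) - df v) \<bullet> (t *\<^sub>R (u - v)) = t * ((df (v + t *\<^sub>R (u - v)) - df v) \<bullet> (u - v))"
          by (rule inner_scaleR_right)
        ultimately have "\<mu> * (t * norm (u - v))\<^sup>2 \<le> t * ((df (v + t *\<^sub>R (u - v)) - df v) \<bullet> (u - v))"
          using tp by (simp add: abs_of_pos)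
        moreover have "\<mu> * (t * norm (u - v))\<^sup>2 = t * (\<mu> * t * (norm (u - v))\<^sup>2)"
          by (simp add: power2_eq_square)
        ultimately have "t * (\<mu> * t * (norm (u - v))\<^sup>2) \<le> t * ((df (v + t *\<^sub>R (u - v)) - df v) \<bullet> (u - v))"
          by simp
        then show ?thesis using tp by simp
      qed simp
    qed
    then show ?thesis by simp
  qed
  have DL: "f u \<le> f v + df v \<bullet> (u - v) + L / 2 * (norm (u - v))\<^sup>2" if uv: "u \<in> \<Omega>" "v \<in> \<Omega>" for u v
  proof -
    have "f (v + (u - v)) \<le> f v + df v \<bullet> (u - v) + L / 2 * (norm (u - v))\<^sup>2"
    proof (rule line_upper[OF grad])
      fix t :: real assume t: "t \<in> {0..1}"
      have "(df (v + t *\<^sub>R (u - v)) - df v) \<bullet> (u - v) \<le> norm (df (v + t *\<^sub>R (u - v)) - df v) * norm (u - v)"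
        by (rule norm_cauchy_schwarz)
      also have "\<dots> \<le> (L * norm (v + t *\<^sub>R (u - v) - v)) * norm (u - v)"
        by (rule mult_right_mono[OF Lip[OF segO[OF uv t] uv(2)]]) simp
      also have "\<dots> = L * t * (norm (u - v))\<^sup>2" using t by (simp add: power2_eq_square)
      finally show "(df (v + t *\<^sub>R (u - v)) - df v) \<bullet> (u - v) \<le> L * t * (norm (u - v))\<^sup>2" .
    qed
    then show ?thesis by simp
  qed
  have xsr: "norm xs \<le> r" using normS xsS .
  have \<alpha>pos: "\<alpha> k > 0" "\<alpha> k \<ge> \<alpha>bar" "\<alpha> k * L \<le> 1" for k
  proof -
    have "\<alpha> k \<ge> \<alpha>bar" "\<alpha> k \<le> 1 / L" using steps by auto
    then show "\<alpha> k > 0" "\<alpha> k \<ge> \<alpha>bar" "\<alpha> k * L \<le> 1" using abar L_pos by (auto simp: field_simps)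
  qed
  have gbound: "norm (df p) \<le> L * norm (p - xs)" if "p \<in> \<Omega>" for p
    using Lip[OF that x0O(2)] dxs by simp
  have step: "f (x (Suc k)) \<le> f (x k) - \<alpha> k / 2 * (norm (df (x k)))\<^sup>2" if xk: "x k \<in> S" for k
  proof -
    define g where "g = df (x k)"
    define a where "a = \<alpha> k"
    have xkr: "norm (x k) \<le> r" using normS xk .
    have xkO: "x k \<in> \<Omega>" using inO xkr r0 by simp
    have "norm g \<le> L * norm (x k - xs)" unfolding g_def by (rule gbound[OF xkO])
    also have "\<dots> \<le> L * (2 * r)" using norm_triangle_ineq4[of "x k" xs] xkr xsr L_pos by (intro mult_left_mono) auto
    finally have ng: "norm g \<le> L * (2 * r)" .
    have "a * norm g \<le> a * (L * (2 * r))" using ng \<alpha>pos(1)[of k] by (simp add: a_def mult_left_mono)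
    also have "\<dots> = (a * L) * (2 * r)" by simp
    also have "\<dots> \<le> 1 * (2 * r)" using \<alpha>pos(3)[of k] r0 by (intro mult_right_mono) (auto simp: a_def)
    finally have ag: "a * norm g \<le> 2 * r" by simp
    have xs1: "x (Suc k) = x k - a *\<^sub>R g" using iter by (simp add: a_def g_def)
    have "norm (x (Suc k)) \<le> norm (x k) + norm (a *\<^sub>R g)" unfolding xs1 by (rule norm_triangle_ineq4)
    also have "norm (a *\<^sub>R g) = a * norm g" using \<alpha>pos(1)[of k] by (simp add: a_def)
    finally have "norm (x (Suc k)) \<le> 3 * r" using xkr ag by linarith
    then have x1O: "x (Suc k) \<in> \<Omega>" by (rule inO)
    have "f (x (Suc k)) \<le> f (x k) + g \<bullet> (x (Suc k) - x k) + L / 2 * (norm (x (Suc k) - x k))\<^sup>2"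
      using DL[OF x1O xkO] by (simp add: g_def)
    also have "g \<bullet> (x (Suc k) - x k) = - a * (norm g)\<^sup>2" by (simp add: xs1 power2_norm_eq_inner)
    also have "(norm (x (Suc k) - x k))\<^sup>2 = a\<^sup>2 * (norm g)\<^sup>2" using \<alpha>pos(1)[of k] by (simp add: xs1 a_def power_mult_distrib)
    finally have A: "f (x (Suc k)) \<le> f (x k) - a * (norm g)\<^sup>2 + L / 2 * (a\<^sup>2 * (norm g)\<^sup>2)" by simp
    have "L / 2 * (a\<^sup>2 * (norm g)\<^sup>2) = (a * L) * (a / 2 * (norm g)\<^sup>2)" by (simp add: power2_eq_square)
    also have "\<dots> \<le> 1 * (a / 2 * (norm g)\<^sup>2)" using \<alpha>pos[of k] by (intro mult_right_mono) (auto simp: a_def)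
    finally have "L / 2 * (a\<^sup>2 * (norm g)\<^sup>2) \<le> a / 2 * (norm g)\<^sup>2" by simp
    with A show ?thesis unfolding a_def g_def by linarith
  qed
  have xS: "x k \<in> S" for k
  proof (induction k)
    case 0 then show ?case using start x0S by simp
  next
    case (Suc k)
    have "0 \<le> \<alpha> k / 2 * (norm (df (x k)))\<^sup>2" using \<alpha>pos(1)[of k] by simp
    then have "f (x (Suc k)) \<le> f (x k)" using step[OF Suc] by linarith
    moreover have "f (x k) \<le> f x0" using Suc by (simp add: S_def sublevel_def)
    ultimately show ?case by (simp add: S_def sublevel_def)
  qed
  have xO: "x k \<in> \<Omega>" for k using inO normS[OF xS[of k]] r0 by simp
  define q0 where "q0 = 2 * \<alpha>bar * \<mu> * L / (\<mu> + L)"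
  define q1 where "q1 = \<mu>\<^sup>2 * \<alpha>bar\<^sup>2 / 4"
  have aL: "\<alpha>bar * L < 1" using abar L_pos by (simp add: field_simps)
  have "\<alpha>bar * \<mu> < \<alpha>bar * L" using muL abar(1) by simp
  then have amu: "\<alpha>bar * \<mu> < 1" using aL by linarith
  have q1: "0 < q1" "q1 < 1" "q1 \<le> \<alpha>bar * \<mu>"
  proof -
    have p: "0 < \<alpha>bar * \<mu>" using abar mu0 by simp
    have e: "q1 = (\<alpha>bar * \<mu>) * (\<alpha>bar * \<mu>) / 4" by (simp add: q1_def power2_eq_square)
    have "(\<alpha>bar * \<mu>) * (\<alpha>bar * \<mu>) < 1 * 1" using p amu by (intro mult_strict_mono) auto
    moreover have "0 < (\<alpha>bar * \<mu>) * (\<alpha>bar * \<mu>)" using p by simp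
    ultimately show "0 < q1" "q1 < 1" using e by linarith+
    have "(\<alpha>bar * \<mu>) * (\<alpha>bar * \<mu>) \<le> (\<alpha>bar * \<mu>) * 4" using p amu by (intro mult_left_mono) auto
    then show "q1 \<le> \<alpha>bar * \<mu>" using e by linarith
  qed
  have q0: "0 < q0" "q0 < 1"
  proof -
    show "0 < q0" using abar mu0 L_pos by (simp add: q0_def)
    have "2 * \<alpha>bar * \<mu> * L = 2 * \<mu> * (\<alpha>bar * L)" by simp
    also have "\<dots> < 2 * \<mu> * 1" using aL mu0 by (intro mult_strict_left_mono) auto
    finally have "2 * \<alpha>bar * \<mu> * L < \<mu> + L" using muL by linarith
    then show "q0 < 1" using mu0 muL by (simp add: q0_def pos_divide_less_eq)
  qed
  have gap: "(norm (df (x k)))\<^sup>2 \<ge> 2 * \<mu> * (f (x k) - f xs)" for k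
  proof -
    define G where "G = norm (df (x k))"
    define D where "D = norm (x k - xs)"
    have "f (x k) + df (x k) \<bullet> (xs - x k) + \<mu> / 2 * (norm (xs - x k))\<^sup>2 \<le> f xs" using SC[OF x0O(2) xO[of k]] .
    moreover have "df (x k) \<bullet> (x k - xs) \<le> G * D" unfolding G_def D_def by (rule norm_cauchy_schwarz)
    moreover have "df (x k) \<bullet> (xs - x k) = - (df (x k) \<bullet> (x k - xs))" by (simp add: inner_diff_right)
    moreover have "norm (xs - x k) = D" by (simp add: D_def norm_minus_commute)
    ultimately have A: "f (x k) - f xs \<le> G * D - \<mu> / 2 * D\<^sup>2" by simp
    have "0 \<le> (\<mu> * D - G)\<^sup>2" by simp
    then have "2 * \<mu> * (G * D - \<mu> / 2 * D\<^sup>2) \<le> G\<^sup>2" by (simp add: power2_eq_square algebra_simps)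
    moreover have "2 * \<mu> * (f (x k) - f xs) \<le> 2 * \<mu> * (G * D - \<mu> / 2 * D\<^sup>2)" using A mu0 by simp
    ultimately show ?thesis unfolding G_def by linarith
  qed
  have fstep: "f (x (Suc k)) - f xs \<le> (1 - q1) * (f (x k) - f xs)" for k
  proof -
    define \<Delta> where "\<Delta> = f (x k) - f xs"
    have d0: "\<Delta> \<ge> 0" using opt by (simp add: \<Delta>_def)
    have "f (x (Suc k)) - f xs \<le> \<Delta> - \<alpha> k / 2 * (norm (df (x k)))\<^sup>2" using step[OF xS] by (simp add: \<Delta>_def)
    also have "\<alpha> k / 2 * (norm (df (x k)))\<^sup>2 \<ge> \<alpha> k / 2 * (2 * \<mu> * \<Delta>)"
      using gap[of k] \<alpha>pos(1)[of k] unfolding \<Delta>_def by (intro mult_left_mono) auto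
    then have "\<Delta> - \<alpha> k / 2 * (norm (df (x k)))\<^sup>2 \<le> \<Delta> - \<alpha> k * \<mu> * \<Delta>" by simp
    also have "\<alpha> k * \<mu> * \<Delta> \<ge> \<alpha>bar * \<mu> * \<Delta>" using \<alpha>pos(2)[of k] mu0 d0 by (intro mult_right_mono) auto
    then have "\<Delta> - \<alpha> k * \<mu> * \<Delta> \<le> \<Delta> - \<alpha>bar * \<mu> * \<Delta>" by simp
    also have "\<alpha>bar * \<mu> * \<Delta> \<ge> q1 * \<Delta>" using q1(3) d0 by (intro mult_right_mono) auto
    then have "\<Delta> - \<alpha>bar * \<mu> * \<Delta> \<le> (1 - q1) * \<Delta>" by (simp add: algebra_simps)
    finally show ?thesis by (simp add: \<Delta>_def)
  qed
  have fall: "f (x k) - f xs \<le> (1 - q1) ^ k * (f x0 - f xs)" for k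
  proof (induction k)
    case 0 then show ?case using start by simp
  next
    case (Suc k)
    have "f (x (Suc k)) - f xs \<le> (1 - q1) * (f (x k) - f xs)" by (rule fstep)
    also have "\<dots> \<le> (1 - q1) * ((1 - q1) ^ k * (f x0 - f xs))" using Suc q1 by (intro mult_left_mono) auto
    finally show ?case by simp
  qed
  have gall: "norm (df (x k)) \<le> sqrt (1 - q1) ^ k * sqrt (2 * L\<^sup>2 / \<mu> * (f x0 - f xs))" for k
  proof -
    have "\<mu> / 2 * (norm (x k - xs))\<^sup>2 \<le> f (x k) - f xs" using SC[OF xO[of k] x0O(2)] dxs by simp
    then have D: "(norm (x k - xs))\<^sup>2 \<le> 2 / \<mu> * (f (x k) - f xs)" using mu0 by (simp add: field_simps)
    have "(norm (df (x k)))\<^sup>2 \<le> (L * norm (x k - xs))\<^sup>2" using gbound[OF xO] by (intro power_mono) auto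
    also have "\<dots> = L\<^sup>2 * (norm (x k - xs))\<^sup>2" by (simp add: power_mult_distrib)
    also have "\<dots> \<le> L\<^sup>2 * (2 / \<mu> * (f (x k) - f xs))" using D by (intro mult_left_mono) auto
    also have "\<dots> \<le> L\<^sup>2 * (2 / \<mu> * ((1 - q1) ^ k * (f x0 - f xs)))" using fall[of k] mu0
      by (intro mult_left_mono) auto
    also have "\<dots> = (1 - q1) ^ k * (2 * L\<^sup>2 / \<mu> * (f x0 - f xs))" by simp
    finally have H: "(norm (df (x k)))\<^sup>2 \<le> (1 - q1) ^ k * (2 * L\<^sup>2 / \<mu> * (f x0 - f xs))" .
    have "norm (df (x k)) = sqrt ((norm (df (x k)))\<^sup>2)" by simp
    also have "\<dots> \<le> sqrt ((1 - q1) ^ k * (2 * L\<^sup>2 / \<mu> * (f x0 - f xs)))" using H by (rule real_sqrt_le_mono)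
    also have "\<dots> = sqrt (1 - q1) ^ k * sqrt (2 * L\<^sup>2 / \<mu> * (f x0 - f xs))" by (metis real_sqrt_mult real_sqrt_power)
    finally show ?thesis .
  qed
  have nid: "(norm a)\<^sup>2 = (norm b)\<^sup>2 + 2 * (b \<bullet> (a - b)) + (norm (a - b))\<^sup>2" for a b :: 'a
    by (simp add: power2_norm_eq_inner inner_diff_left inner_diff_right inner_commute algebra_simps)
  define \<phi> where "\<phi> z = f z - \<mu> / 2 * (norm z)\<^sup>2" for z
  define d\<phi> where "d\<phi> z = df z - \<mu> *\<^sub>R z" for z
  have dphi_in: "d\<phi> b \<bullet> (a - b) = df b \<bullet> (a - b) - \<mu> * (b \<bullet> (a - b))" for a b :: 'a
    by (simp add: d\<phi>_def inner_diff_left)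
  have muid: "\<mu> / 2 * (norm a)\<^sup>2 = \<mu> / 2 * (norm b)\<^sup>2 + \<mu> * (b \<bullet> (a - b)) + \<mu> / 2 * (norm (a - b))\<^sup>2" for a b :: 'a
    by (subst nid[of a b]) (simp add: algebra_simps)
  have conv: "\<phi> b + d\<phi> b \<bullet> (a - b) \<le> \<phi> a" if "a \<in> \<Omega>" "b \<in> \<Omega>" for a b
    using SC[OF that] muid[of a b] unfolding \<phi>_def dphi_in by linarith
  have desc: "\<phi> a \<le> \<phi> b + d\<phi> b \<bullet> (a - b) + (L - \<mu>) / 2 * (norm (a - b))\<^sup>2" if "a \<in> \<Omega>" "b \<in> \<Omega>" for a b
  proof -
    have "(L - \<mu>) / 2 * (norm (a - b))\<^sup>2 = L / 2 * (norm (a - b))\<^sup>2 - \<mu> / 2 * (norm (a - b))\<^sup>2"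
      by (simp only: diff_divide_distrib left_diff_distrib)
    then show ?thesis using DL[OF that] muid[of a b] unfolding \<phi>_def dphi_in by linarith
  qed
  define K3 where "K3 = cball (0::'a) (3 * r)"
  have K3O: "p \<in> \<Omega>" if "p \<in> K3" for p using inO that by (simp add: K3_def)
  have Lm: "L - \<mu> > 0" using muL by simp
  define e where "e = r * (L - \<mu>) / L"
  have e0: "e > 0" using r0 Lm L_pos by (simp add: e_def)
  have nest: "(g \<bullet> g) + \<mu> * L * (d \<bullet> d) \<le> (L + \<mu>) * (g \<bullet> d)"
    if pq: "p \<in> K3" "q \<in> K3" "norm (q - p) < e" and gd: "g = df q - df p" "d = q - p" for p q g d
  proof -
    have pO: "p \<in> \<Omega>" and qO: "q \<in> \<Omega>" using K3O pq by auto
    have gphi: "d\<phi> q - d\<phi> p = g - \<mu> *\<^sub>R d" by (simp add: d\<phi>_def gd algebra_simps)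
    have ng: "norm g \<le> L * norm d" using Lip[OF qO pO] gd by simp
    have "norm (g - \<mu> *\<^sub>R d) \<le> norm g + norm (\<mu> *\<^sub>R d)" by (rule norm_triangle_ineq4)
    also have "norm (\<mu> *\<^sub>R d) = \<mu> * norm d" using mu0 by simp
    also have "\<mu> * norm d \<le> L * norm d" using muL by (intro mult_right_mono) auto
    finally have "norm (d\<phi> q - d\<phi> p) \<le> 2 * L * norm d" using ng gphi by simp
    moreover have "norm d * L < r * (L - \<mu>)" using pq(3) gd L_pos by (simp add: e_def pos_less_divide_eq)
    moreover have "2 * L * norm d = 2 * (norm d * L)" "2 * r * (L - \<mu>) = 2 * (r * (L - \<mu>))" by simp_all
    ultimately have "norm (d\<phi> q - d\<phi> p) \<le> 2 * r * (L - \<mu>)" by linarith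
    then have nw: "norm ((1 / (L - \<mu>)) *\<^sub>R (d\<phi> q - d\<phi> p)) \<le> 2 * r"
      using Lm by (simp add: pos_divide_le_eq mult.commute)
    have nq: "norm q \<le> 3 * r" "norm p \<le> 3 * r" using pq by (auto simp: K3_def)
    have w: "q - (1 / (L - \<mu>)) *\<^sub>R (d\<phi> q - d\<phi> p) \<in> \<Omega>"
      using norm_triangle_ineq4[of q "(1 / (L - \<mu>)) *\<^sub>R (d\<phi> q - d\<phi> p)"] nw nq by (simp add: \<Omega>_def)
    have w': "p + (1 / (L - \<mu>)) *\<^sub>R (d\<phi> q - d\<phi> p) \<in> \<Omega>"
      using norm_triangle_ineq[of p "(1 / (L - \<mu>)) *\<^sub>R (d\<phi> q - d\<phi> p)"] nw nq by (simp add: \<Omega>_def)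
    have coco: "(norm (d\<phi> q - d\<phi> p))\<^sup>2 / (L - \<mu>) \<le> (d\<phi> q - d\<phi> p) \<bullet> (q - p)"
      by (rule cocoercive[of \<Omega> \<phi> d\<phi> "L - \<mu>", OF conv desc Lm pO qO w w'])
    have e1: "(d\<phi> q - d\<phi> p) \<bullet> (q - p) = g \<bullet> d - \<mu> * (d \<bullet> d)"
      by (simp add: gphi gd(2)[symmetric] inner_diff_left)
    have e2: "(norm (d\<phi> q - d\<phi> p))\<^sup>2 = g \<bullet> g - 2 * \<mu> * (g \<bullet> d) + \<mu> * \<mu> * (d \<bullet> d)"
      by (simp add: gphi power2_norm_eq_inner inner_diff_left inner_diff_right inner_commute algebra_simps)
    have "g \<bullet> g - 2 * \<mu> * (g \<bullet> d) + \<mu> * \<mu> * (d \<bullet> d) \<le> (L - \<mu>) * (g \<bullet> d - \<mu> * (d \<bullet> d))"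
      using coco Lm unfolding e1 e2 by (simp add: pos_divide_le_eq mult.commute)
    then show ?thesis by (rule nest_alg)
  qed
  have xK3: "x k \<in> K3" for k using normS[OF xS[of k]] r0 by (simp add: K3_def)
  have xsK3: "xs \<in> K3" using xsr r0 by (simp add: K3_def)
  have contr: "norm (x (Suc k) - xs) \<le> sqrt (1 - q0) * norm (x k - xs)" for k
  proof -
    define a where "a = \<alpha> k"
    define T where "T z = z - a *\<^sub>R df z" for z
    have a: "a > 0" "\<alpha>bar \<le> a" "a * L \<le> 1" using \<alpha>pos[of k] by (auto simp: a_def)
    have aLm: "a * (L + \<mu>) \<le> 2"
    proof -
      have "a * \<mu> \<le> a * L" using a muL by (intro mult_left_mono) auto
      then show ?thesis using a(3) by (simp add: algebra_simps)
    qed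
    have loc: "norm (T q - T p) \<le> sqrt (1 - q0) * norm (q - p)"
      if pq: "p \<in> K3" "q \<in> K3" "norm (q - p) < e" for p q
    proof -
      define g where "g = df q - df p"
      define d where "d = q - p"
      define s where "s = g \<bullet> d"
      define G2 where "G2 = g \<bullet> g"
      define D2 where "D2 = d \<bullet> d"
      have N: "G2 + \<mu> * L * D2 \<le> (L + \<mu>) * s" using nest[OF pq g_def d_def] by (simp add: G2_def D2_def s_def)
      have G0: "G2 \<ge> 0" "D2 \<ge> 0" by (simp_all add: G2_def D2_def)
      have Td: "T q - T p = d - a *\<^sub>R g" by (simp add: T_def d_def g_def algebra_simps)
      define Z where "Z = D2 - 2 * a * s + a * a * G2"
      have nZ: "(norm (T q - T p))\<^sup>2 = Z"
        by (simp add: Td Z_def D2_def s_def G2_def power2_norm_eq_inner inner_diff_left inner_diff_right inner_commute algebra_simps)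
      have i1: "2 * a * (G2 + \<mu> * L * D2) \<le> 2 * a * ((L + \<mu>) * s)" using N a by (intro mult_left_mono) auto
      have i2: "a * (a * (L + \<mu>)) * G2 \<le> a * 2 * G2" using aLm a G0 by (intro mult_right_mono mult_left_mono) auto
      have i3: "2 * \<alpha>bar * \<mu> * L * D2 \<le> 2 * a * \<mu> * L * D2" using a mu0 L_pos G0 by (intro mult_right_mono) auto
      have "(L + \<mu>) * Z = (L + \<mu>) * D2 - 2 * a * ((L + \<mu>) * s) + a * (a * (L + \<mu>)) * G2"
        by (simp add: Z_def algebra_simps)
      also have "\<dots> \<le> (L + \<mu>) * D2 - 2 * a * (G2 + \<mu> * L * D2) + a * 2 * G2" using i1 i2 by linarith
      also have "\<dots> = (L + \<mu>) * D2 - 2 * a * \<mu> * L * D2" by (simp add: algebra_simps)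
      also have "\<dots> \<le> (L + \<mu>) * D2 - 2 * \<alpha>bar * \<mu> * L * D2" using i3 by linarith
      also have "\<dots> = (L + \<mu>) * ((1 - q0) * D2)" using mu0 L_pos by (simp add: q0_def field_simps)
      finally have "(L + \<mu>) * Z \<le> (L + \<mu>) * ((1 - q0) * D2)" .
      then have "Z \<le> (1 - q0) * D2" using mu0 L_pos by (simp add: mult_le_cancel_left_pos)
      then have "(norm (T q - T p))\<^sup>2 \<le> (1 - q0) * (norm (q - p))\<^sup>2"
        unfolding nZ by (simp add: D2_def d_def power2_norm_eq_inner)
      then have "sqrt ((norm (T q - T p))\<^sup>2) \<le> sqrt ((1 - q0) * (norm (q - p))\<^sup>2)" by (rule real_sqrt_le_mono)
      then show ?thesis by (simp add: real_sqrt_mult)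
    qed
    have "norm (T (x k) - T xs) \<le> sqrt (1 - q0) * norm (x k - xs)"
      by (rule seg_contract[of K3 e T, OF _ e0 loc xsK3 xK3]) (auto simp: K3_def)
    moreover have "T (x k) = x (Suc k)" using iter by (simp add: T_def a_def)
    moreover have "T xs = xs" by (simp add: T_def dxs)
    ultimately show ?thesis by simp
  qed
  have xall: "norm (x k - xs) \<le> sqrt (1 - q0) ^ k * norm (x0 - xs)" for k
  proof (induction k)
    case 0 then show ?case using start by simp
  next
    case (Suc k)
    have "norm (x (Suc k) - xs) \<le> sqrt (1 - q0) * norm (x k - xs)" by (rule contr)
    also have "\<dots> \<le> sqrt (1 - q0) * (sqrt (1 - q0) ^ k * norm (x0 - xs))"
      using Suc q0 by (intro mult_left_mono) auto
    finally show ?case by simp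
  qed
  have A: "(\<exists>k. norm (x k - xs) \<le> \<epsilon>) \<and> (LEAST k. norm (x k - xs) \<le> \<epsilon>) \<le> nat (iter_bound \<epsilon> (norm (x0 - xs)) (sqrt (1 - q0)))"
    by (rule count_bound[OF xall]) (use xne q0 eps in auto)
  have B: "(\<exists>k. f (x k) - f xs \<le> \<epsilon>) \<and> (LEAST k. f (x k) - f xs \<le> \<epsilon>) \<le> nat (iter_bound \<epsilon> (f x0 - f xs) (1 - q1))"
    by (rule count_bound[OF fall]) (use x0_nonopt q1 eps in auto)
  have C: "(\<exists>k. norm (df (x k)) \<le> \<epsilon>) \<and> (LEAST k. norm (df (x k)) \<le> \<epsilon>) \<le> nat (iter_bound \<epsilon> (sqrt (2 * L\<^sup>2 / \<mu> * (f x0 - f xs))) (sqrt (1 - q1)))"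
    by (rule count_bound[OF gall]) (use x0_nonopt q1 eps mu0 L_pos in auto)
  show ?thesis using A B C unfolding Let_def q0_def q1_def \<mu>_def \<Omega>_def r_def S_def by blast
qed

end
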